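(* Let $u\le v$ be positive integers, $n\ge0$, $I\in\mathrm{Hilb}^n(\{x^uy^v=0\},0)$, and $J^k=I\cap(x^ky^k)$. For $0\le k\le v-1$ define $\Delta_k=0$ if $x^ky^k\in I$; $\Delta_k=i+j$ if $J^k$ is of type ① with exponent pair $(i,j)$; and $\Delta_k=i+j-1$ if $J^k$ is of type ② with exponent pair $(i,j)$. Then each $J^k$ ($0\le k\le v-1$) falls into exactly one of these three cases, and $$\sum_{k=0}^{v-1}\Delta_k=n.$$
   Context: $\mathrm{Hilb}^n(\{x^uy^v=0\},0)$ is the set of ideals $I\subset\mathbb{C}[[x,y]]$ with $\dim_{\mathbb{C}}\mathbb{C}[[x,y]]/I=n$, supported at the origin, with $x^uy^v\in I$. $J^k$ is of type ① with exponent pair $(i,j)$ if there are $a,b\in\mathbb{C}\setminus\{0\}$, integers $i,j\ge1$, $h\in\mathbb{C}[[x,y]]$ with $E=x^ky^k(ax^i+by^j)+x^{k+1}y^{k+1}h\in J^k$ and $J^k=J^{k+1}+(E)$; it is of type ② with exponent pair $(i,j)$ if there are integers $i,j\ge1$, $h_1,h_2\in\mathbb{C}[[x,y]]$ with $E_1=x^ky^kx^i+x^{k+1}y^{k+1}h_1$, $E_2=x^ky^ky^j+x^{k+1}y^{k+1}h_2$ in $J^k$ and $J^k=J^{k+1}+(E_1,E_2)$, and it is not of type ①. (In the paper, $\Delta_k$ is the number of boxes in the $k$th row of the associated weak diagonal partition, so the claim says this partition has $n$ boxes in total.) *)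

theory Defs
  imports "HOL-Computational_Algebra.Formal_Power_Series"
begin

text \<open>C[[x,y]] is modelled as C[[y]][[x]]: formal power series in x whose
coefficients are formal power series in y.\<close>
type_synonym ps = "complex fps fps"

definition vx :: ps where "vx = fps_X"
definition vy :: ps where "vy = fps_const fps_X"
definition sc :: "complex \<Rightarrow> ps" where "sc c = fps_const (fps_const c)"

definition is_ideal :: "ps set \<Rightarrow> bool" where
  "is_ideal I \<longleftrightarrow> 0 \<in> I \<and> (\<forall>a\<in>I. \<forall>b\<in>I. a + b \<in> I) \<and> (\<forall>a\<in>I. \<forall>r. r * a \<in> I)"

text \<open>dim_C (C[[x,y]]/I) = n: there are n elements whose classes form a C-basis of the quotient.\<close>
definition colength :: "ps set \<Rightarrow> nat \<Rightarrow> bool" where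
  "colength I n \<longleftrightarrow> (\<exists>f :: nat \<Rightarrow> ps.
      (\<forall>g. \<exists>c :: nat \<Rightarrow> complex. g - (\<Sum>i<n. sc (c i) * f i) \<in> I) \<and>
      (\<forall>c :: nat \<Rightarrow> complex. (\<Sum>i<n. sc (c i) * f i) \<in> I \<longrightarrow> (\<forall>i<n. c i = 0)))"

text \<open>Hilb^n({x^u y^v = 0},0). (Finite colength ideals of the local ring C[[x,y]] are
automatically supported at the origin.)\<close>
definition hilb_curve :: "nat \<Rightarrow> nat \<Rightarrow> nat \<Rightarrow> ps set \<Rightarrow> bool" where
  "hilb_curve u v n I \<longleftrightarrow> is_ideal I \<and> colength I n \<and> vx ^ u * vy ^ v \<in> I"

definition principal :: "ps \<Rightarrow> ps set" where
  "principal a = {a * g | g. True}"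

definition ideal2 :: "ps \<Rightarrow> ps \<Rightarrow> ps set" where
  "ideal2 a b = {g1 * a + g2 * b | g1 g2. True}"

definition ideal_sum :: "ps set \<Rightarrow> ps set \<Rightarrow> ps set" where
  "ideal_sum A B = {a + b | a b. a \<in> A \<and> b \<in> B}"

definition Jk :: "ps set \<Rightarrow> nat \<Rightarrow> ps set" where
  "Jk I k = I \<inter> principal (vx ^ k * vy ^ k)"

definition type1 :: "ps set \<Rightarrow> nat \<Rightarrow> nat \<Rightarrow> nat \<Rightarrow> bool" where
  "type1 I k i j \<longleftrightarrow> i \<ge> 1 \<and> j \<ge> 1 \<and>
     (\<exists>a b h. a \<noteq> 0 \<and> b \<noteq> 0 \<and>
        (let E = vx ^ k * vy ^ k * (sc a * vx ^ i + sc b * vy ^ j) + vx ^ (k+1) * vy ^ (k+1) * h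
         in E \<in> Jk I k \<and> Jk I k = ideal_sum (Jk I (k+1)) (principal E)))"

definition is_type1 :: "ps set \<Rightarrow> nat \<Rightarrow> bool" where
  "is_type1 I k \<longleftrightarrow> (\<exists>i j. type1 I k i j)"

definition type2 :: "ps set \<Rightarrow> nat \<Rightarrow> nat \<Rightarrow> nat \<Rightarrow> bool" where
  "type2 I k i j \<longleftrightarrow> i \<ge> 1 \<and> j \<ge> 1 \<and>
     (\<exists>h1 h2.
        (let E1 = vx ^ k * vy ^ k * vx ^ i + vx ^ (k+1) * vy ^ (k+1) * h1;
             E2 = vx ^ k * vy ^ k * vy ^ j + vx ^ (k+1) * vy ^ (k+1) * h2
         in E1 \<in> Jk I k \<and> E2 \<in> Jk I k \<and> Jk I k = ideal_sum (Jk I (k+1)) (ideal2 E1 E2)))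
     \<and> \<not> is_type1 I k"

definition is_type2 :: "ps set \<Rightarrow> nat \<Rightarrow> bool" where
  "is_type2 I k \<longleftrightarrow> (\<exists>i j. type2 I k i j)"

definition delta_rel :: "ps set \<Rightarrow> nat \<Rightarrow> nat \<Rightarrow> bool" where
  "delta_rel I k d \<longleftrightarrow>
     (vx ^ k * vy ^ k \<in> I \<and> d = 0) \<or>
     (\<exists>i j. type1 I k i j \<and> d = i + j) \<or>
     (\<exists>i j. type2 I k i j \<and> d = i + j - 1)"

end

theory Submission
  imports Defs
begin


definition px :: "ps \<Rightarrow> complex fps" where "px g = Abs_fps (\<lambda>m. (fps_nth ((fps_nth g m)) 0))"
definition py :: "ps \<Rightarrow> complex fps" where "py g = (fps_nth g 0)"
definition ex :: "complex fps \<Rightarrow> ps" where "ex p = Abs_fps (\<lambda>m. fps_const ((fps_nth p m)))"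
definition glue :: "complex fps \<Rightarrow> complex fps \<Rightarrow> ps" where
  "glue p q = ex p + fps_const q - sc ((fps_nth p 0))"

lemma px_add[simp]: "px (a+b) = px a + px b" by (simp add: px_def fps_eq_iff)
lemma px_uminus[simp]: "px (-a) = - px a" by (simp add: px_def fps_eq_iff)
lemma px_diff[simp]: "px (a-b) = px a - px b" by (simp add: px_def fps_eq_iff)
lemma px_0[simp]: "px 0 = 0" by (simp add: px_def fps_eq_iff)
lemma px_1[simp]: "px 1 = 1" by (simp add: px_def fps_eq_iff)
lemma px_mult[simp]: "px (a*b) = px a * px b"
  by (simp add: px_def fps_eq_iff fps_mult_nth fps_sum_nth)
lemma px_sc[simp]: "px (sc c) = fps_const c" by (simp add: px_def sc_def fps_eq_iff)
lemma px_vx[simp]: "px vx = fps_X" by (simp add: px_def vx_def fps_eq_iff)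
lemma px_vy[simp]: "px vy = 0" by (simp add: px_def vy_def fps_eq_iff)
lemma px_pow[simp]: "px (a^n) = px a ^ n" by (induct n) auto
lemma px_sum[simp]: "px (sum f A) = sum (\<lambda>i. px (f i)) A"
  by (induct A rule: infinite_finite_induct) auto
lemma px_ex[simp]: "px (ex p) = p" by (simp add: px_def ex_def fps_eq_iff)
lemma px_const[simp]: "px (fps_const q) = fps_const ((fps_nth q 0))"
  by (simp add: px_def fps_eq_iff)

lemma py_add[simp]: "py (a+b) = py a + py b" by (simp add: py_def)
lemma py_uminus[simp]: "py (-a) = - py a" by (simp add: py_def)
lemma py_diff[simp]: "py (a-b) = py a - py b" by (simp add: py_def)
lemma py_0[simp]: "py 0 = 0" by (simp add: py_def)
lemma py_1[simp]: "py 1 = 1" by (simp add: py_def)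
lemma py_mult[simp]: "py (a*b) = py a * py b" by (simp add: py_def)
lemma py_sc[simp]: "py (sc c) = fps_const c" by (simp add: py_def sc_def)
lemma py_vx[simp]: "py vx = 0" by (simp add: py_def vx_def)
lemma py_vy[simp]: "py vy = fps_X" by (simp add: py_def vy_def)
lemma py_pow[simp]: "py (a^n) = py a ^ n" by (induct n) auto
lemma py_sum[simp]: "py (sum f A) = sum (\<lambda>i. py (f i)) A"
  by (induct A rule: infinite_finite_induct) auto
lemma py_ex[simp]: "py (ex p) = fps_const ((fps_nth p 0))" by (simp add: py_def ex_def)
lemma py_const[simp]: "py (fps_const q) = q" by (simp add: py_def)

lemma px_py_0: "fps_nth (px g) 0 = fps_nth (py g) 0" by (simp add: px_def py_def)

lemma px_glue[simp]: "(fps_nth p 0) = (fps_nth q 0) \<Longrightarrow> px (glue p q) = p"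
  by (simp add: glue_def)
lemma py_glue[simp]: "(fps_nth p 0) = (fps_nth q 0) \<Longrightarrow> py (glue p q) = q"
  by (simp add: glue_def)

lemma kernel:
  assumes "px g = 0" "py g = 0"
  shows "\<exists>h. g = vx * vy * h"
proof -
  define h :: ps where "h = Abs_fps (\<lambda>m. fps_shift 1 ((fps_nth g (m+1))))"
  have g0: "(fps_nth g 0) = 0" using assms(2) by (simp add: py_def)
  have gm: "(fps_nth ((fps_nth g m)) 0) = 0" for m using assms(1) by (simp add: px_def fps_eq_iff)
  have "g = vx * vy * h"
  proof (rule fps_ext)
    fix m
    show "(fps_nth g m) = (fps_nth (vx * vy * h) m)"
    proof (cases m)
      case 0 then show ?thesis using g0 by (simp add: vx_def mult.assoc)
    next
      case (Suc m')
      have "((fps_nth g m)) = fps_shift 1 ((fps_nth g m)) * fps_X"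
      proof (cases "fps_nth g m = 0")
        case False
        then show ?thesis
          by (intro fps_shift_times_fps_X[symmetric] subdegree_geI) (use gm in auto)
      qed simp
      then show ?thesis using Suc
        by (simp add: vx_def vy_def h_def mult.assoc fps_X_mult_nth mult.commute)
    qed
  qed
  then show ?thesis by blast
qed

lemma unit_ps:
  assumes "(fps_nth ((fps_nth g 0)) 0) \<noteq> 0"
  shows "\<exists>H. g * H = (1::ps)"
proof -
  have "(fps_nth g 0) * inverse ((fps_nth g 0)) = 1" using assms by (rule inverse_mult_eq_1')
  then show ?thesis using fps_right_inverse by blast
qed



lemma sc_0[simp]: "sc 0 = 0" by (simp add: sc_def)
lemma sc_1[simp]: "sc 1 = 1" by (simp add: sc_def)
lemma sc_add: "sc (a+b) = sc a + sc b" by (simp add: sc_def)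
lemma sc_mult: "sc (a*b) = sc a * sc b" by (simp add: sc_def)
lemma sc_uminus: "sc (-a) = - sc a" by (simp add: sc_def)
lemma sc_diff: "sc (a-b) = sc a - sc b" by (simp add: sc_def)
lemma sc_sum: "sc (sum h A) = (\<Sum>i\<in>A. sc (h i))"
  by (induct A rule: infinite_finite_induct) (auto simp: sc_add)
lemmas sc_simps = sc_add sc_mult sc_uminus sc_diff

lemma id0: "is_ideal I \<Longrightarrow> 0 \<in> I" by (simp add: is_ideal_def)
lemma id_add: "is_ideal I \<Longrightarrow> a \<in> I \<Longrightarrow> b \<in> I \<Longrightarrow> a + b \<in> I" by (simp add: is_ideal_def)
lemma id_mult: "is_ideal I \<Longrightarrow> a \<in> I \<Longrightarrow> r * a \<in> I" by (simp add: is_ideal_def)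
lemma id_multr: "is_ideal I \<Longrightarrow> a \<in> I \<Longrightarrow> a * r \<in> I" by (simp add: is_ideal_def mult.commute)
lemma id_neg: "is_ideal I \<Longrightarrow> a \<in> I \<Longrightarrow> - a \<in> I"
  using id_mult[of I a "-1"] by simp
lemma id_diff: "is_ideal I \<Longrightarrow> a \<in> I \<Longrightarrow> b \<in> I \<Longrightarrow> a - b \<in> I"
  using id_add[of I a "-b"] id_neg[of I b] by simp
lemma id_sum: "is_ideal I \<Longrightarrow> (\<And>i. i \<in> A \<Longrightarrow> f i \<in> I) \<Longrightarrow> sum f A \<in> I"
  by (induct A rule: infinite_finite_induct) (auto simp: id0 id_add)
lemma id_diff_iff: "is_ideal I \<Longrightarrow> b \<in> I \<Longrightarrow> a - b \<in> I \<longleftrightarrow> a \<in> I"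
  by (metis diff_add_cancel id_add id_diff)

lemma dep_aux:
  fixes A :: "nat set" and g f :: "nat \<Rightarrow> ps" and C :: "nat \<Rightarrow> nat \<Rightarrow> complex"
  assumes W: "is_ideal W"
  shows "finite A \<Longrightarrow> card A > n \<Longrightarrow> (\<forall>l\<in>A. g l - (\<Sum>i<n. sc (C l i) * f i) \<in> W) \<Longrightarrow>
     \<exists>c. (\<exists>l\<in>A. c l \<noteq> 0) \<and> (\<Sum>l\<in>A. sc (c l) * g l) \<in> W"
proof (induction n arbitrary: A g C)
  case 0
  then obtain l0 where l0: "l0 \<in> A" by fastforce
  define c :: "nat \<Rightarrow> complex" where "c = (\<lambda>l. if l = l0 then 1 else 0)"
  have "(\<Sum>l\<in>A. sc (c l) * g l) = (\<Sum>l\<in>A. if l = l0 then g l else 0)"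
    by (rule sum.cong) (auto simp: c_def)
  also have "\<dots> = g l0" using l0 0 by simp
  finally show ?case using 0 l0 by (intro exI[of _ c]) (auto simp: c_def)
next
  case (Suc n)
  show ?case
  proof (cases "\<forall>l\<in>A. C l n = 0")
    case True
    have "\<forall>l\<in>A. g l - (\<Sum>i<n. sc (C l i) * f i) \<in> W"
      using Suc.prems(3) True by simp
    then show ?thesis using Suc by auto
  next
    case False
    then obtain l0 where l0: "l0 \<in> A" "C l0 n \<noteq> 0" by blast
    define lam where "lam = (\<lambda>l. C l n / C l0 n)"
    define A' where "A' = A - {l0}"
    define g' where "g' = (\<lambda>l. g l - sc (lam l) * g l0)"
    define C' where "C' = (\<lambda>l i. C l i - lam l * C l0 i)"
    have fA': "finite A'" using Suc.prems by (simp add: A'_def)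
    have cA': "card A' > n" using Suc.prems l0 by (simp add: A'_def)
    have key: "g' l - (\<Sum>i<n. sc (C' l i) * f i) =
      (g l - (\<Sum>i<Suc n. sc (C l i) * f i)) - sc (lam l) * (g l0 - (\<Sum>i<Suc n. sc (C l0 i) * f i))"
      for l
    proof -
      have e: "lam l * C l0 n = C l n" using l0 by (simp add: lam_def)
      have "sc (lam l) * sc (C l0 n) = sc (C l n)" using e sc_mult by metis
      then have e2: "sc (lam l) * (sc (C l0 n) * f n) = sc (C l n) * f n"
        by (simp add: mult.assoc[symmetric])
      have s1: "(\<Sum>i<n. sc (C' l i) * f i) = (\<Sum>i<n. sc (C l i) * f i) - sc (lam l) * (\<Sum>i<n. sc (C l0 i) * f i)"
        by (simp add: C'_def sc_diff sc_mult sum_subtractf sum_distrib_left left_diff_distrib mult.assoc)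
      show ?thesis
        unfolding g'_def s1 sum.lessThan_Suc right_diff_distrib distrib_left e2 by simp
    qed
    have "\<forall>l\<in>A'. g' l - (\<Sum>i<n. sc (C' l i) * f i) \<in> W"
    proof
      fix l assume "l \<in> A'"
      then have "l \<in> A" by (simp add: A'_def)
      then show "g' l - (\<Sum>i<n. sc (C' l i) * f i) \<in> W"
      proof -
        have h1: "g l - (\<Sum>i<Suc n. sc (C l i) * f i) \<in> W" using Suc.prems(3) \<open>l \<in> A\<close> by blast
        have h2: "g l0 - (\<Sum>i<Suc n. sc (C l0 i) * f i) \<in> W" using Suc.prems(3) l0(1) by blast
        show ?thesis unfolding key by (rule id_diff[OF W h1 id_mult[OF W h2]])
      qed
    qed
    from Suc.IH[OF fA' cA' this] obtain c' where
      c': "\<exists>l\<in>A'. c' l \<noteq> 0" "(\<Sum>l\<in>A'. sc (c' l) * g' l) \<in> W" by blast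
    define c where "c = (\<lambda>l. if l = l0 then - (\<Sum>l'\<in>A'. c' l' * lam l') else c' l)"
    have "(\<Sum>l\<in>A. sc (c l) * g l) = sc (c l0) * g l0 + (\<Sum>l\<in>A'. sc (c l) * g l)"
      using Suc.prems(1) l0 by (simp add: A'_def sum.remove)
    also have "(\<Sum>l\<in>A'. sc (c l) * g l) = (\<Sum>l\<in>A'. sc (c' l) * g l)"
      by (rule sum.cong) (auto simp: c_def A'_def)
    also have "sc (c l0) * g l0 = - (\<Sum>l\<in>A'. sc (c' l) * sc (lam l) * g l0)"
      by (simp add: c_def sc_uminus sc_sum sc_mult sum_distrib_right)
    finally have calc: "(\<Sum>l\<in>A. sc (c l) * g l) = - (\<Sum>l\<in>A'. sc (c' l) * sc (lam l) * g l0) + (\<Sum>l\<in>A'. sc (c' l) * g l)" .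
    have "(\<Sum>l\<in>A'. sc (c' l) * g' l) = (\<Sum>l\<in>A'. sc (c' l) * g l) - (\<Sum>l\<in>A'. sc (c' l) * sc (lam l) * g l0)"
      by (simp add: g'_def right_diff_distrib sum_subtractf mult.assoc)
    then have "(\<Sum>l\<in>A. sc (c l) * g l) = (\<Sum>l\<in>A'. sc (c' l) * g' l)"
      using calc by simp
    then have "(\<Sum>l\<in>A. sc (c l) * g l) \<in> W" using c' by simp
    moreover have "\<exists>l\<in>A. c l \<noteq> 0" using c'(1) by (auto simp: c_def A'_def)
    ultimately show ?thesis by blast
  qed
qed

lemma dim_bound:
  assumes W: "is_ideal W" and cl: "colength W n"
    and ind: "\<forall>c. (\<Sum>l<m. sc (c l) * g l) \<in> W \<longrightarrow> (\<forall>l<m. c l = 0)"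
  shows "m \<le> n"
proof (rule ccontr)
  assume "\<not> m \<le> n"
  then have mn: "card {..<m} > n" by simp
  obtain f where sp: "\<forall>g. \<exists>c. g - (\<Sum>i<n. sc (c i) * f i) \<in> W"
    using cl unfolding colength_def by blast
  then have ex: "\<forall>l. \<exists>c. g l - (\<Sum>i<n. sc (c i) * f i) \<in> W" by blast
  from choice[OF ex] obtain C where "\<forall>l. g l - (\<Sum>i<n. sc (C l i) * f i) \<in> W" by blast
  from dep_aux[OF W _ mn] this obtain c where "\<exists>l\<in>{..<m}. c l \<noteq> 0" "(\<Sum>l<m. sc (c l) * g l) \<in> W"
    by blast
  then show False using ind by auto
qed

lemma colength_unique:
  assumes W: "is_ideal W" and "colength W n" "colength W m" shows "n = m"
proof -
  obtain f where "\<forall>c. (\<Sum>i<n. sc (c i) * f i) \<in> W \<longrightarrow> (\<forall>i<n. c i = 0)"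
    using assms(2) unfolding colength_def by blast
  from dim_bound[OF W assms(3) this] have "n \<le> m" .
  moreover obtain g where "\<forall>c. (\<Sum>i<m. sc (c i) * g i) \<in> W \<longrightarrow> (\<forall>i<m. c i = 0)"
    using assms(3) unfolding colength_def by blast
  from dim_bound[OF W assms(2) this] have "m \<le> n" .
  ultimately show ?thesis by simp
qed

lemma sum_split_add: fixes h :: "nat \<Rightarrow> 'a::comm_monoid_add" and a d :: nat shows "(\<Sum>i<a+d. h i) = (\<Sum>i<a. h i) + (\<Sum>l<d. h (a+l))"
  by (induct d) (simp_all add: sum.lessThan_Suc add.assoc)

lemma colength_extend:
  assumes W: "is_ideal W" and W': "is_ideal W'" and sub: "W \<subseteq> W'"
    and cl: "colength W' a"
    and gin: "\<forall>l<d. g l \<in> W'"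
    and sp: "\<forall>w\<in>W'. \<exists>c. w - (\<Sum>l<d. sc (c l) * g l) \<in> W"
    and ind: "\<forall>c. (\<Sum>l<d. sc (c l) * g l) \<in> W \<longrightarrow> (\<forall>l<d. c l = 0)"
  shows "colength W (a+d)"
proof -
  obtain f where fsp: "\<forall>h. \<exists>c. h - (\<Sum>i<a. sc (c i) * f i) \<in> W'"
    and find: "\<forall>c. (\<Sum>i<a. sc (c i) * f i) \<in> W' \<longrightarrow> (\<forall>i<a. c i = 0)"
    using cl unfolding colength_def by blast
  define F where "F = (\<lambda>i. if i < a then f i else g (i - a))"
  have split: "(\<Sum>i<a+d. sc (c i) * F i) = (\<Sum>i<a. sc (c i) * f i) + (\<Sum>l<d. sc (c (a+l)) * g l)" for c
    unfolding sum_split_add by (simp add: F_def)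
  show ?thesis unfolding colength_def
  proof (intro exI[of _ F] conjI allI impI)
    fix h
    obtain c1 where c1: "h - (\<Sum>i<a. sc (c1 i) * f i) \<in> W'" using fsp by blast
    then obtain c2 where c2: "(h - (\<Sum>i<a. sc (c1 i) * f i)) - (\<Sum>l<d. sc (c2 l) * g l) \<in> W"
      using sp by blast
    define c where "c = (\<lambda>i. if i < a then c1 i else c2 (i - a))"
    have "(\<Sum>i<a+d. sc (c i) * F i) = (\<Sum>i<a. sc (c1 i) * f i) + (\<Sum>l<d. sc (c2 l) * g l)"
      unfolding split by (simp add: c_def)
    then show "\<exists>c. h - (\<Sum>i<a+d. sc (c i) * F i) \<in> W" using c2
      by (intro exI[of _ c]) (simp add: algebra_simps)
  next
    fix c i assume H: "(\<Sum>i<a+d. sc (c i) * F i) \<in> W" and i: "i < a + d"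
    have S2: "(\<Sum>l<d. sc (c (a+l)) * g l) \<in> W'"
      using gin W' by (intro id_sum id_mult) auto
    have "(\<Sum>i<a. sc (c i) * f i) + (\<Sum>l<d. sc (c (a+l)) * g l) \<in> W'" using H sub split by auto
    then have "(\<Sum>i<a. sc (c i) * f i) \<in> W'"
      using S2 W' by (metis add_diff_cancel id_diff)
    then have z1: "\<forall>i<a. c i = 0" using find by blast
    then have "(\<Sum>i<a. sc (c i) * f i) = 0" by simp
    then have "(\<Sum>l<d. sc (c (a+l)) * g l) \<in> W" using H split by simp
    then have z2: "\<forall>l<d. c (a+l) = 0" using ind[rule_format, of "\<lambda>l. c (a+l)"] by blast
    show "c i = 0"
    proof (cases "i < a")
      case True then show ?thesis using z1 by simp
    next
      case False
      then have "i = a + (i - a)" "i - a < d" using i by auto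
      then show ?thesis using z2 by metis
    qed
  qed
qed

lemma colength_by_functional:
  fixes \<Phi> :: "ps \<Rightarrow> nat \<Rightarrow> complex"
  assumes ladd: "\<And>g h l. l < d \<Longrightarrow> \<Phi> (g + h) l = \<Phi> g l + \<Phi> h l"
    and lsc: "\<And>c g l. l < d \<Longrightarrow> \<Phi> (sc c * g) l = c * \<Phi> g l"
    and surj: "\<And>l. l < d \<Longrightarrow> \<exists>b. \<forall>l'<d. \<Phi> b l' = (if l' = l then 1 else 0)"
    and ker: "\<And>g. g \<in> W \<longleftrightarrow> (\<forall>l<d. \<Phi> g l = 0)"
  shows "colength W d"
proof -
  have z: "\<Phi> 0 l = 0" if "l < d" for l using ladd[OF that, of 0 0] by simp
  have ls: "\<Phi> (sum h A) l = (\<Sum>i\<in>A. \<Phi> (h i) l)" if "l < d" for h and A :: "nat set" and l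
    by (induct A rule: infinite_finite_induct) (auto simp: z ladd that)
  have ld: "\<Phi> (g - h) l = \<Phi> g l - \<Phi> h l" if "l < d" for g h l
    using ladd[OF that, of "g - h" h] by simp
  obtain b where b: "\<forall>l<d. \<forall>l'<d. \<Phi> (b l) l' = (if l' = l then 1 else 0)"
    using surj by metis
  have comb: "\<Phi> (\<Sum>i<d. sc (c i) * b i) l' = c l'" if "l' < d" for c l'
  proof -
    have "\<Phi> (\<Sum>i<d. sc (c i) * b i) l' = (\<Sum>i<d. c i * (if l' = i then 1 else 0))"
      using that b by (simp add: ls lsc)
    also have "\<dots> = c l'" using that by (simp add: if_distrib cong: if_cong)
    finally show ?thesis .
  qed
  show ?thesis unfolding colength_def
  proof (intro exI[of _ b] conjI allI impI)
    fix g
    show "\<exists>c. g - (\<Sum>i<d. sc (c i) * b i) \<in> W"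
      by (intro exI[of _ "\<Phi> g"]) (simp add: ker ld comb)
  next
    fix c i assume "(\<Sum>i<d. sc (c i) * b i) \<in> W" "i < d"
    then show "c i = 0" using comb ker by metis
  qed
qed



definition pideal :: "(complex fps \<times> complex fps) set \<Rightarrow> bool" where
  "pideal P \<longleftrightarrow> (\<forall>(p,q)\<in>P. fps_nth p 0 = 0 \<and> fps_nth q 0 = 0) \<and>
     (\<forall>x\<in>P. \<forall>y\<in>P. (fst x + fst y, snd x + snd y) \<in> P) \<and>
     (\<forall>(p,q)\<in>P. \<forall>a b. fps_nth a 0 = fps_nth b 0 \<longrightarrow> (a*p, b*q) \<in> P)"

lemma pconst: "pideal P \<Longrightarrow> (p,q) \<in> P \<Longrightarrow> fps_nth p 0 = 0 \<and> fps_nth q 0 = 0"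
  unfolding pideal_def by blast
lemma padd: "pideal P \<Longrightarrow> (p,q) \<in> P \<Longrightarrow> (p',q') \<in> P \<Longrightarrow> (p+p', q+q') \<in> P"
  unfolding pideal_def by force
lemma pmul: "pideal P \<Longrightarrow> (p,q) \<in> P \<Longrightarrow> fps_nth a 0 = fps_nth b 0 \<Longrightarrow> (a*p, b*q) \<in> P"
  unfolding pideal_def by blast
lemma psub: "pideal P \<Longrightarrow> (p,q) \<in> P \<Longrightarrow> (p',q') \<in> P \<Longrightarrow> (p-p', q-q') \<in> P"
  using padd[of P p q "-p'" "-q'"] pmul[of P p' q' "-1" "-1"] by simp

lemma pideal_swap: "pideal P \<Longrightarrow> pideal {(q,p). (p,q) \<in> P}"
  unfolding pideal_def by force

lemma pideal_pure: "pideal P \<Longrightarrow> pideal {(p,q). (p,q) \<in> P \<and> q = 0}"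
  unfolding pideal_def by force

lemma minx:
  assumes P: "pideal P" and p0: "(p0,q0) \<in> P" "p0 \<noteq> 0"
  shows "\<exists>i e. i \<ge> 1 \<and> (fps_X ^ i, e) \<in> P \<and> (\<forall>(p,q)\<in>P. fps_X ^ i dvd p)"
proof -
  define S where "S = {subdegree p | p q. (p,q) \<in> P \<and> p \<noteq> 0}"
  define i where "i = Least (\<lambda>n. n \<in> S)"
  have "subdegree p0 \<in> S" using p0 by (auto simp: S_def)
  then have iS: "i \<in> S" unfolding i_def by (rule LeastI)
  have ile: "i \<le> subdegree p" if "(p,q) \<in> P" "p \<noteq> 0" for p q
    unfolding i_def by (rule Least_le) (use that in \<open>auto simp: S_def\<close>)
  from iS obtain p1 q1 where p1: "(p1,q1) \<in> P" "p1 \<noteq> 0" "subdegree p1 = i" by (auto simp: S_def)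
  define u where "u = fps_shift i p1"
  have p1u: "p1 = u * fps_X ^ i" using p1 subdegree_decompose[of p1] by (simp add: u_def)
  have u0: "fps_nth u 0 \<noteq> 0" using p1 nth_subdegree_nonzero[of p1] by (simp add: u_def)
  have "fps_nth p1 0 = 0" using pconst[OF P p1(1)] by simp
  then have i1: "i \<ge> 1" using p1 by (metis less_one not_less subdegree_eq_0_iff)
  define b where "b = fps_const (fps_nth (inverse u) 0)"
  have "(inverse u * p1, b * q1) \<in> P" by (rule pmul[OF P p1(1)]) (simp add: b_def)
  moreover have "inverse u * p1 = fps_X ^ i"
    using inverse_mult_eq_1[OF u0] by (simp add: p1u mult.assoc[symmetric])
  ultimately have "(fps_X ^ i, b * q1) \<in> P" by simp
  moreover have "\<forall>(p,q)\<in>P. fps_X ^ i dvd p"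
  proof (clarify)
    fix p q assume pq: "(p,q) \<in> P"
    show "fps_X ^ i dvd p"
    proof (cases "p = 0")
      case False
      then have "i \<le> subdegree p" using ile pq by blast
      then have "p = fps_shift i p * fps_X ^ i" by (rule subdegree_decompose')
      then show ?thesis by (metis dvd_triv_right)
    qed simp
  qed
  ultimately show ?thesis using i1 by blast
qed

lemma unit_trick:
  assumes P: "pideal P" and h: "(0, fps_X ^ j * z) \<in> P" and z: "fps_nth z 0 \<noteq> 0"
  shows "(0, fps_X ^ j) \<in> P"
proof -
  have "(fps_const (fps_nth (inverse z) 0) * 0, inverse z * (fps_X ^ j * z)) \<in> P"
    by (rule pmul[OF P h]) simp
  moreover have "inverse z * (fps_X ^ j * z) = fps_X ^ j"
  proof -
    have "inverse z * z = 1" by (rule inverse_mult_eq_1[OF z])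
    then show ?thesis by (metis mult.left_commute mult_1_right)
  qed
  ultimately show ?thesis by simp
qed

lemma classify:
  assumes P: "pideal P" and x0: "(p0,0) \<in> P" "p0 \<noteq> 0" and y0: "(0,q0) \<in> P" "q0 \<noteq> 0"
  shows "\<exists>i j. i \<ge> 1 \<and> j \<ge> 1 \<and>
    ((\<exists>a b. a \<noteq> 0 \<and> b \<noteq> 0 \<and> (fps_const a * fps_X ^ i, fps_const b * fps_X ^ j) \<in> P \<and>
        (\<forall>(p,q)\<in>P. \<exists>r1 r2. fps_nth r1 0 = fps_nth r2 0 \<and> p = r1 * (fps_const a * fps_X ^ i) \<and>
              q = r2 * (fps_const b * fps_X ^ j)))
     \<or> ((fps_X ^ i, 0) \<in> P \<and> (0, fps_X ^ j) \<in> P \<and> (\<forall>(p,q)\<in>P. fps_X ^ i dvd p \<and> fps_X ^ j dvd q)))"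
proof -
  obtain i q1 where i: "i \<ge> 1" "(fps_X ^ i, q1) \<in> P" "\<forall>(p,q)\<in>P. fps_X ^ i dvd p"
    using minx[OF P x0] by blast
  have P': "pideal {(q,p). (p,q) \<in> P}" using pideal_swap[OF P] .
  obtain j p2 where j: "j \<ge> 1" "(p2, fps_X ^ j) \<in> P" "\<forall>(p,q)\<in>P. fps_X ^ j dvd q"
    using minx[OF P', of q0 0] y0 by auto
  have dv: "\<forall>(p,q)\<in>P. fps_X ^ i dvd p \<and> fps_X ^ j dvd q" using i(3) j(3) by auto
  obtain s where s: "p2 = fps_X ^ i * s" using i(3) j(2) by (auto elim!: dvdE)
  obtain w where w: "q1 = fps_X ^ j * w" using j(3) i(2) by (auto elim!: dvdE)
  have both: "(fps_X ^ i, 0) \<in> P \<and> (0, fps_X ^ j) \<in> P" if "(fps_X ^ i, 0) \<in> P \<or> (0, fps_X ^ j) \<in> P"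
  proof -
    have a: "(0, fps_X ^ j) \<in> P" if h: "(fps_X ^ i, 0) \<in> P"
    proof -
      have "(s * fps_X ^ i, fps_const (fps_nth s 0) * 0) \<in> P" by (rule pmul[OF P h]) simp
      from psub[OF P j(2) this] show ?thesis by (simp add: s mult.commute)
    qed
    have b: "(fps_X ^ i, 0) \<in> P" if h: "(0, fps_X ^ j) \<in> P"
    proof -
      have "(fps_const (fps_nth w 0) * 0, w * fps_X ^ j) \<in> P" by (rule pmul[OF P h]) simp
      from psub[OF P i(2) this] show ?thesis by (simp add: w mult.commute)
    qed
    show ?thesis using that a b by blast
  qed
  show ?thesis
  proof (cases "(fps_X ^ i, 0) \<in> P \<or> (0, fps_X ^ j) \<in> P")
    case True
    then show ?thesis using both dv i(1) j(1) by blast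
  next
    case False
    then have nx: "(fps_X ^ i, 0) \<notin> P" and ny: "(0, fps_X ^ j) \<notin> P" by auto
    have "(s * fps_X ^ i, fps_const (fps_nth s 0) * q1) \<in> P" by (rule pmul[OF P i(2)]) simp
    from psub[OF P j(2) this] have "(0, fps_X ^ j * (1 - fps_const (fps_nth s 0) * w)) \<in> P"
      by (simp add: s w mult.commute right_diff_distrib mult.left_commute)
    then have "fps_nth (1 - fps_const (fps_nth s 0) * w) 0 = 0"
      using unit_trick[OF P] ny by blast
    then have sw: "fps_nth s 0 * fps_nth w 0 = 1" by simp
    define b where "b = fps_nth w 0"
    have b0: "b \<noteq> 0" using sw by (auto simp: b_def)
    have "(1 * fps_X ^ i, (fps_const b * inverse w) * q1) \<in> P"
      by (rule pmul[OF P i(2)]) (use b0 in \<open>simp add: b_def\<close>)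
    moreover have "(fps_const b * inverse w) * q1 = fps_const b * fps_X ^ j"
      using b0 by (simp add: w b_def mult.commute mult.left_commute inverse_mult_eq_1')
    ultimately have e: "(fps_const 1 * fps_X ^ i, fps_const b * fps_X ^ j) \<in> P" by simp
    have rep: "\<forall>(p,q)\<in>P. \<exists>r1 r2. fps_nth r1 0 = fps_nth r2 0 \<and> p = r1 * (fps_const 1 * fps_X ^ i) \<and>
              q = r2 * (fps_const b * fps_X ^ j)"
    proof (clarify)
      fix p q assume pq: "(p,q) \<in> P"
      obtain s' where s': "p = fps_X ^ i * s'" using dv pq by (auto elim!: dvdE)
      obtain t' where t': "q = fps_X ^ j * t'" using dv pq by (auto elim!: dvdE)
      have "(s' * (fps_const 1 * fps_X ^ i), fps_const (fps_nth s' 0) * (fps_const b * fps_X ^ j)) \<in> P"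
        by (rule pmul[OF P e]) simp
      from psub[OF P pq this] have "(p - s' * (fps_const 1 * fps_X ^ i), q - fps_const (fps_nth s' 0) * (fps_const b * fps_X ^ j)) \<in> P" .
      moreover have "p - s' * (fps_const 1 * fps_X ^ i) = 0" by (simp add: s' mult.commute)
      moreover have "q - fps_const (fps_nth s' 0) * (fps_const b * fps_X ^ j) = fps_X ^ j * (t' - fps_const (fps_nth s' 0 * b))"
        by (simp add: t' algebra_simps)
      ultimately have "(0, fps_X ^ j * (t' - fps_const (fps_nth s' 0 * b))) \<in> P" by simp
      then have "fps_nth (t' - fps_const (fps_nth s' 0 * b)) 0 = 0"
        using unit_trick[OF P] ny by blast
      then have tb: "fps_nth t' 0 = fps_nth s' 0 * b" by simp
      define r2 where "r2 = fps_const (inverse b) * t'"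
      have "fps_nth s' 0 = fps_nth r2 0" using tb b0 by (simp add: r2_def)
      moreover have "p = s' * (fps_const 1 * fps_X ^ i)" by (simp add: s' mult.commute)
      moreover have "q = r2 * (fps_const b * fps_X ^ j)"
      proof -
        have cb: "fps_const (inverse b) * fps_const b = (1::complex fps)" using b0 by simp
        have "r2 * (fps_const b * fps_X ^ j) = (fps_const (inverse b) * fps_const b) * (fps_X ^ j * t')"
          by (simp only: r2_def mult_ac)
        also have "\<dots> = q" using cb by (simp add: t')
        finally show ?thesis by simp
      qed
      ultimately show "\<exists>r1 r2. fps_nth r1 0 = fps_nth r2 0 \<and> p = r1 * (fps_const 1 * fps_X ^ i) \<and>
              q = r2 * (fps_const b * fps_X ^ j)" by blast
    qed
    have T1: "\<exists>a b'. a \<noteq> 0 \<and> b' \<noteq> 0 \<and> (fps_const a * fps_X ^ i, fps_const b' * fps_X ^ j) \<in> P \<and>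
        (\<forall>(p,q)\<in>P. \<exists>r1 r2. fps_nth r1 0 = fps_nth r2 0 \<and> p = r1 * (fps_const a * fps_X ^ i) \<and>
              q = r2 * (fps_const b' * fps_X ^ j))"
      apply (rule exI[of _ "1::complex"], rule exI[of _ b])
      apply (intro conjI)
         apply simp
        apply (rule b0)
       apply (rule e)
      apply (rule rep)
      done
    then show ?thesis using i(1) j(1) by blast
  qed
qed



definition K :: "ps set \<Rightarrow> nat \<Rightarrow> ps set" where "K I k = {g. vx ^ k * vy ^ k * g \<in> I}"
definition Lk :: "ps set \<Rightarrow> nat \<Rightarrow> ps set" where
  "Lk I k = {\<kappa> + vx * vy * h | \<kappa> h. \<kappa> \<in> K I k}"
definition M :: "ps set \<Rightarrow> nat \<Rightarrow> ps set" where
  "M I k = {\<iota> + vx ^ k * vy ^ k * t | \<iota> t. \<iota> \<in> I}"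
definition PK :: "ps set \<Rightarrow> nat \<Rightarrow> (complex fps \<times> complex fps) set" where
  "PK I k = {(px g, py g) | g. g \<in> K I k}"

lemma vx_nz[simp]: "vx \<noteq> 0" by (simp add: vx_def)
lemma vy_nz[simp]: "vy \<noteq> 0" by (simp add: vy_def)
lemma xy_nz[simp]: "vx ^ k * vy ^ k \<noteq> 0" by simp

lemma xy_Suc: "vx ^ Suc k * vy ^ Suc k = vx ^ k * vy ^ k * (vx * vy)"
  by (simp add: mult_ac)

lemma K_ideal: "is_ideal I \<Longrightarrow> is_ideal (K I k)"
  unfolding is_ideal_def K_def by (auto simp: distrib_left mult.left_commute)

lemma I_sub_K: "is_ideal I \<Longrightarrow> I \<subseteq> K I k"
  unfolding K_def using id_mult by blast

lemma K_xy_in: "is_ideal I \<Longrightarrow> vx ^ k * vy ^ k \<in> I \<Longrightarrow> K I k = UNIV"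
  unfolding K_def using id_multr by blast

lemma LkI: "\<kappa> \<in> K I k \<Longrightarrow> g = \<kappa> + vx * vy * h \<Longrightarrow> g \<in> Lk I k"
  unfolding Lk_def by blast
lemma MI: "\<iota> \<in> I \<Longrightarrow> g = \<iota> + vx ^ k * vy ^ k * t \<Longrightarrow> g \<in> M I k"
  unfolding M_def by blast

lemma Lk_ideal: assumes "is_ideal I" shows "is_ideal (Lk I k)"
proof -
  have KI: "is_ideal (K I k)" using K_ideal[OF assms] .
  show ?thesis unfolding is_ideal_def
  proof (intro conjI ballI allI)
    show "0 \<in> Lk I k" unfolding Lk_def using id0[OF KI] by force
  next
    fix a b assume "a \<in> Lk I k" "b \<in> Lk I k"
    then obtain k1 h1 k2 h2 where "a = k1 + vx*vy*h1" "b = k2 + vx*vy*h2" "k1 \<in> K I k" "k2 \<in> K I k"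
      unfolding Lk_def by blast
    then show "a + b \<in> Lk I k" using id_add[OF KI]
      by (intro LkI[of "k1+k2" _ _ _ "h1+h2"]) (auto simp: algebra_simps)
  next
    fix a r assume "a \<in> Lk I k"
    then obtain k1 h1 where "a = k1 + vx*vy*h1" "k1 \<in> K I k"
      unfolding Lk_def by blast
    then show "r * a \<in> Lk I k" using id_mult[OF KI]
      by (intro LkI[of "r*k1" _ _ _ "r*h1"]) (auto simp: algebra_simps)
  qed
qed

lemma M_ideal: assumes I: "is_ideal I" shows "is_ideal (M I k)"
  unfolding is_ideal_def
proof (intro conjI ballI allI)
  show "0 \<in> M I k" unfolding M_def using id0[OF I] by force
next
  fix a b assume "a \<in> M I k" "b \<in> M I k"
  then obtain i1 t1 i2 t2 where "a = i1 + vx ^ k * vy ^ k * t1" "b = i2 + vx ^ k * vy ^ k * t2" "i1 \<in> I" "i2 \<in> I"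
    unfolding M_def by blast
  then show "a + b \<in> M I k" using id_add[OF I]
    by (intro MI[of "i1+i2" _ _ _ "t1+t2"]) (auto simp: algebra_simps)
next
  fix a r assume "a \<in> M I k"
  then obtain i1 t1 where "a = i1 + vx ^ k * vy ^ k * t1" "i1 \<in> I"
    unfolding M_def by blast
  then show "r * a \<in> M I k" using id_mult[OF I]
    by (intro MI[of "r*i1" _ _ _ "r*t1"]) (auto simp: algebra_simps)
qed

lemma Lk_char: "g \<in> Lk I k \<longleftrightarrow> (\<exists>\<kappa>\<in>K I k. px g = px \<kappa> \<and> py g = py \<kappa>)"
proof
  assume "g \<in> Lk I k"
  then obtain \<kappa> h where "g = \<kappa> + vx * vy * h" "\<kappa> \<in> K I k" unfolding Lk_def by blast
  then show "\<exists>\<kappa>\<in>K I k. px g = px \<kappa> \<and> py g = py \<kappa>" by auto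
next
  assume "\<exists>\<kappa>\<in>K I k. px g = px \<kappa> \<and> py g = py \<kappa>"
  then obtain \<kappa> where k: "\<kappa> \<in> K I k" "px (g - \<kappa>) = 0" "py (g - \<kappa>) = 0" by auto
  from kernel[OF k(2,3)] obtain h where "g - \<kappa> = vx * vy * h" by blast
  then have "g = \<kappa> + vx * vy * h" by (simp add: algebra_simps)
  then show "g \<in> Lk I k" unfolding Lk_def using k(1) by blast
qed

lemma K_proper:
  assumes I: "is_ideal I" and nx: "vx ^ k * vy ^ k \<notin> I" and g: "g \<in> K I k"
  shows "fps_nth (fps_nth g 0) 0 = 0"
proof (rule ccontr)
  assume "fps_nth (fps_nth g 0) 0 \<noteq> 0"
  then obtain H where "g * H = 1" using unit_ps by blast
  moreover have "g * H \<in> K I k" using id_multr[OF K_ideal[OF I] g] .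
  ultimately show False using nx by (simp add: K_def)
qed

lemma PK_pideal:
  assumes I: "is_ideal I" and nx: "vx ^ k * vy ^ k \<notin> I"
  shows "pideal (PK I k)"
  unfolding pideal_def
proof (intro conjI)
  have KI: "is_ideal (K I k)" using K_ideal[OF I] .
  show "\<forall>(p,q)\<in>PK I k. fps_nth p 0 = 0 \<and> fps_nth q 0 = 0"
    using K_proper[OF I nx] by (auto simp: PK_def px_def py_def)
next
  have KI: "is_ideal (K I k)" using K_ideal[OF I] .
  show "\<forall>x\<in>PK I k. \<forall>y\<in>PK I k. (fst x + fst y, snd x + snd y) \<in> PK I k"
  proof (intro ballI)
    fix x y assume "x \<in> PK I k" "y \<in> PK I k"
    then obtain g h where "x = (px g, py g)" "y = (px h, py h)" "g \<in> K I k" "h \<in> K I k"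
      unfolding PK_def by blast
    then show "(fst x + fst y, snd x + snd y) \<in> PK I k"
      unfolding PK_def using id_add[OF KI] by (auto intro!: exI[of _ "g+h"])
  qed
next
  have KI: "is_ideal (K I k)" using K_ideal[OF I] .
  show "\<forall>(p,q)\<in>PK I k. \<forall>a b :: complex fps. fps_nth a 0 = fps_nth b 0 \<longrightarrow> (a*p, b*q) \<in> PK I k"
  proof (clarify)
    fix p q and a b :: "complex fps" assume pq: "(p,q) \<in> PK I k" and ab: "fps_nth a 0 = fps_nth b 0"
    then obtain g where "p = px g" "q = py g" "g \<in> K I k" unfolding PK_def by blast
    then show "(a*p, b*q) \<in> PK I k"
      unfolding PK_def using id_mult[OF KI, of g "glue a b"] ab
      by (auto intro!: exI[of _ "glue a b * g"])
  qed
qed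

lemma nth_poly_sum: "fps_nth (\<Sum>l<m. fps_const (c l) * (fps_X::complex fps) ^ l) r = (if r < m then c r else 0)"
  by (simp add: fps_sum_nth if_distrib cong: if_cong)

lemma pure_x:
  assumes I: "is_ideal I" and cl: "colength I n" and nx: "vx ^ k * vy ^ k \<notin> I"
  shows "\<exists>p. p \<noteq> 0 \<and> (p, 0) \<in> PK I k"
proof -
  have "\<not> (\<forall>c. (\<Sum>l<Suc n. sc (c l) * vx ^ l) \<in> I \<longrightarrow> (\<forall>l<Suc n. c l = 0))"
    using dim_bound[OF I cl, where m="Suc n" and g="\<lambda>l. vx ^ l"] by auto
  then obtain c l0 where G: "(\<Sum>l<Suc n. sc (c l) * vx ^ l) \<in> I" and l0: "l0 < Suc n" "c l0 \<noteq> 0" by blast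
  define G where "G = (\<Sum>l<Suc n. sc (c l) * vx ^ l)"
  have GK: "G \<in> K I k" using G I_sub_K[OF I] by (auto simp: G_def)
  have pxG: "px G = (\<Sum>l<Suc n. fps_const (c l) * fps_X ^ l)" by (simp add: G_def)
  have pyG: "py G = fps_const (c 0)"
    by (simp add: G_def zero_power if_distrib lessThan_Suc_eq_insert_0 sum.reindex cong: if_cong)
  have "fps_nth (fps_nth G 0) 0 = 0" using K_proper[OF I nx GK] .
  then have "fps_nth (py G) 0 = 0" by (simp add: py_def)
  then have "py G = 0" using pyG by simp
  moreover have "px G \<noteq> 0"
  proof
    assume "px G = 0"
    then have "fps_nth (px G) l0 = 0" by simp
    then show False using l0 by (simp only: pxG nth_poly_sum) simp
  qed
  ultimately show ?thesis using GK unfolding PK_def by (intro exI[of _ "px G"]) force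
qed

lemma pure_y:
  assumes I: "is_ideal I" and cl: "colength I n" and nx: "vx ^ k * vy ^ k \<notin> I"
  shows "\<exists>q. q \<noteq> 0 \<and> (0, q) \<in> PK I k"
proof -
  have "\<not> (\<forall>c. (\<Sum>l<Suc n. sc (c l) * vy ^ l) \<in> I \<longrightarrow> (\<forall>l<Suc n. c l = 0))"
    using dim_bound[OF I cl, where m="Suc n" and g="\<lambda>l. vy ^ l"] by auto
  then obtain c l0 where G: "(\<Sum>l<Suc n. sc (c l) * vy ^ l) \<in> I" and l0: "l0 < Suc n" "c l0 \<noteq> 0" by blast
  define G where "G = (\<Sum>l<Suc n. sc (c l) * vy ^ l)"
  have GK: "G \<in> K I k" using G I_sub_K[OF I] by (auto simp: G_def)
  have pyG: "py G = (\<Sum>l<Suc n. fps_const (c l) * fps_X ^ l)" by (simp add: G_def)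
  have pxG: "px G = fps_const (c 0)"
    by (simp add: G_def zero_power if_distrib lessThan_Suc_eq_insert_0 sum.reindex cong: if_cong)
  have "fps_nth (fps_nth G 0) 0 = 0" using K_proper[OF I nx GK] .
  then have "fps_nth (px G) 0 = 0" by (simp add: px_def)
  then have "px G = 0" using pxG by simp
  moreover have "py G \<noteq> 0"
  proof
    assume "py G = 0"
    then have "fps_nth (py G) l0 = 0" by simp
    then show False using l0 by (simp only: pyG nth_poly_sum) simp
  qed
  ultimately show ?thesis using GK unfolding PK_def by (intro exI[of _ "py G"]) force
qed



lemma mem_principal: "x \<in> principal a \<longleftrightarrow> (\<exists>g. x = a * g)" by (auto simp: principal_def)
lemma mem_ideal2: "x \<in> ideal2 a b \<longleftrightarrow> (\<exists>g1 g2. x = g1 * a + g2 * b)" by (auto simp: ideal2_def)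
lemma mem_ideal_sum: "x \<in> ideal_sum A B \<longleftrightarrow> (\<exists>a b. x = a + b \<and> a \<in> A \<and> b \<in> B)" by (auto simp: ideal_sum_def)
lemma mem_Jk: "x \<in> Jk I k \<longleftrightarrow> x \<in> I \<and> (\<exists>g. x = vx ^ k * vy ^ k * g)"
  by (auto simp: Jk_def mem_principal)

lemma pow_vy0[simp]: "0 < j \<Longrightarrow> px (vy ^ j) = 0" by (simp add: zero_power)
lemma pow_vx0[simp]: "0 < i \<Longrightarrow> py (vx ^ i) = 0" by (simp add: zero_power)

lemma cancel_xy: "vx ^ k * vy ^ k * a = vx ^ k * vy ^ k * b \<Longrightarrow> a = b"
  using xy_nz[of k] by (metis mult_left_cancel)

lemma type1_data:
  assumes I: "is_ideal I" and t: "type1 I k i j"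
  shows "\<exists>a b e. a \<noteq> 0 \<and> b \<noteq> 0 \<and> i \<ge> 1 \<and> j \<ge> 1 \<and> e \<in> K I k \<and>
     px e = fps_const a * fps_X ^ i \<and> py e = fps_const b * fps_X ^ j \<and>
     (\<forall>\<kappa>\<in>K I k. \<exists>r h. \<kappa> = r * e + vx * vy * h)"
proof -
  obtain a b h where ij: "i \<ge> 1" "j \<ge> 1" and ab: "a \<noteq> 0" "b \<noteq> 0"
    and E: "vx ^ k * vy ^ k * (sc a * vx ^ i + sc b * vy ^ j) + vx ^ (k+1) * vy ^ (k+1) * h \<in> Jk I k"
    and J: "Jk I k = ideal_sum (Jk I (k+1)) (principal (vx ^ k * vy ^ k * (sc a * vx ^ i + sc b * vy ^ j) + vx ^ (k+1) * vy ^ (k+1) * h))"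
    using t unfolding type1_def Let_def by blast
  define e where "e = sc a * vx ^ i + sc b * vy ^ j + vx * vy * h"
  have Ee: "vx ^ k * vy ^ k * (sc a * vx ^ i + sc b * vy ^ j) + vx ^ (k+1) * vy ^ (k+1) * h = vx ^ k * vy ^ k * e"
    by (simp add: e_def xy_Suc algebra_simps)
  have eK: "e \<in> K I k" using E unfolding Ee mem_Jk K_def by blast
  have pe: "px e = fps_const a * fps_X ^ i" "py e = fps_const b * fps_X ^ j"
    using ij by (simp_all add: e_def)
  have rep: "\<forall>\<kappa>\<in>K I k. \<exists>r h. \<kappa> = r * e + vx * vy * h"
  proof
    fix \<kappa> assume "\<kappa> \<in> K I k"
    then have "vx ^ k * vy ^ k * \<kappa> \<in> Jk I k" unfolding mem_Jk K_def by blast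
    then obtain a' r where "vx ^ k * vy ^ k * \<kappa> = a' + vx ^ k * vy ^ k * e * r" "a' \<in> Jk I (k+1)"
      unfolding J Ee mem_ideal_sum mem_principal by blast
    moreover then obtain h' where "a' = vx ^ (k+1) * vy ^ (k+1) * h'" unfolding mem_Jk by blast
    ultimately have "vx ^ k * vy ^ k * \<kappa> = vx ^ k * vy ^ k * (r * e + vx * vy * h')"
      by (simp add: xy_Suc algebra_simps)
    then show "\<exists>r h. \<kappa> = r * e + vx * vy * h" using cancel_xy by blast
  qed
  show ?thesis using ab ij eK pe rep by blast
qed

lemma type2_data:
  assumes I: "is_ideal I" and t: "type2 I k i j"
  shows "\<exists>e1 e2. i \<ge> 1 \<and> j \<ge> 1 \<and> e1 \<in> K I k \<and> e2 \<in> K I k \<and>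
     px e1 = fps_X ^ i \<and> py e1 = 0 \<and> px e2 = 0 \<and> py e2 = fps_X ^ j \<and>
     (\<forall>\<kappa>\<in>K I k. \<exists>r1 r2 h. \<kappa> = r1 * e1 + r2 * e2 + vx * vy * h)"
proof -
  obtain h1 h2 where ij: "i \<ge> 1" "j \<ge> 1"
    and E1: "vx ^ k * vy ^ k * vx ^ i + vx ^ (k+1) * vy ^ (k+1) * h1 \<in> Jk I k"
    and E2: "vx ^ k * vy ^ k * vy ^ j + vx ^ (k+1) * vy ^ (k+1) * h2 \<in> Jk I k"
    and J: "Jk I k = ideal_sum (Jk I (k+1)) (ideal2 (vx ^ k * vy ^ k * vx ^ i + vx ^ (k+1) * vy ^ (k+1) * h1)
                 (vx ^ k * vy ^ k * vy ^ j + vx ^ (k+1) * vy ^ (k+1) * h2))"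
    using t unfolding type2_def Let_def by blast
  define e1 where "e1 = vx ^ i + vx * vy * h1"
  define e2 where "e2 = vy ^ j + vx * vy * h2"
  have Ee1: "vx ^ k * vy ^ k * vx ^ i + vx ^ (k+1) * vy ^ (k+1) * h1 = vx ^ k * vy ^ k * e1"
    by (simp add: e1_def xy_Suc algebra_simps)
  have Ee2: "vx ^ k * vy ^ k * vy ^ j + vx ^ (k+1) * vy ^ (k+1) * h2 = vx ^ k * vy ^ k * e2"
    by (simp add: e2_def xy_Suc algebra_simps)
  have eK: "e1 \<in> K I k" "e2 \<in> K I k" using E1 E2 unfolding Ee1 Ee2 mem_Jk K_def by blast+
  have pe: "px e1 = fps_X ^ i" "py e1 = 0" "px e2 = 0" "py e2 = fps_X ^ j"
    using ij by (simp_all add: e1_def e2_def)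
  have rep: "\<forall>\<kappa>\<in>K I k. \<exists>r1 r2 h. \<kappa> = r1 * e1 + r2 * e2 + vx * vy * h"
  proof
    fix \<kappa> assume "\<kappa> \<in> K I k"
    then have "vx ^ k * vy ^ k * \<kappa> \<in> Jk I k" unfolding mem_Jk K_def by blast
    then obtain a' g1 g2 where "vx ^ k * vy ^ k * \<kappa> = a' + (g1 * (vx ^ k * vy ^ k * e1) + g2 * (vx ^ k * vy ^ k * e2))"
       "a' \<in> Jk I (k+1)"
      unfolding J Ee1 Ee2 mem_ideal_sum mem_ideal2 by blast
    moreover then obtain h' where "a' = vx ^ (k+1) * vy ^ (k+1) * h'" unfolding mem_Jk by blast
    ultimately have "vx ^ k * vy ^ k * \<kappa> = vx ^ k * vy ^ k * (g1 * e1 + g2 * e2 + vx * vy * h')"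
      by (simp add: xy_Suc algebra_simps)
    then show "\<exists>r1 r2 h. \<kappa> = r1 * e1 + r2 * e2 + vx * vy * h" using cancel_xy by blast
  qed
  show ?thesis using ij eK pe rep by blast
qed

lemma type1_notin: assumes I: "is_ideal I" and t: "type1 I k i j" shows "vx ^ k * vy ^ k \<notin> I"
proof
  assume xy: "vx ^ k * vy ^ k \<in> I"
  obtain a b e where d: "b \<noteq> 0" "j \<ge> 1" "py e = fps_const b * fps_X ^ j"
     "\<forall>\<kappa>\<in>K I k. \<exists>r h. \<kappa> = r * e + vx * vy * h"
    using type1_data[OF I t] by blast
  have "1 \<in> K I k" using K_xy_in[OF I xy] by simp
  then obtain r h where "1 = r * e + vx * vy * h" using d(4) by blast
  then have "fps_nth (py (1::ps)) 0 = fps_nth (py (r * e + vx * vy * h)) 0" by simp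
  then show False using d by simp
qed

lemma type2_notin: assumes I: "is_ideal I" and t: "type2 I k i j" shows "vx ^ k * vy ^ k \<notin> I"
proof
  assume xy: "vx ^ k * vy ^ k \<in> I"
  obtain e1 e2 where d: "j \<ge> 1" "py e1 = 0" "py e2 = fps_X ^ j"
     "\<forall>\<kappa>\<in>K I k. \<exists>r1 r2 h. \<kappa> = r1 * e1 + r2 * e2 + vx * vy * h"
    using type2_data[OF I t] by blast
  have "1 \<in> K I k" using K_xy_in[OF I xy] by simp
  then obtain r1 r2 h where "1 = r1 * e1 + r2 * e2 + vx * vy * h" using d(4) by blast
  then have "fps_nth (py (1::ps)) 0 = fps_nth (py (r1 * e1 + r2 * e2 + vx * vy * h)) 0" by simp
  then show False using d by simp
qed



lemma exists_type:
  assumes I: "is_ideal I" and cl: "colength I n" and nx: "vx ^ k * vy ^ k \<notin> I"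
  shows "is_type1 I k \<or> is_type2 I k"
proof -
  have P: "pideal (PK I k)" using PK_pideal[OF I nx] .
  obtain p0 where x0: "p0 \<noteq> 0" "(p0, 0) \<in> PK I k" using pure_x[OF I cl nx] by blast
  obtain q0 where y0: "q0 \<noteq> 0" "(0, q0) \<in> PK I k" using pure_y[OF I cl nx] by blast
  have KI: "is_ideal (K I k)" using K_ideal[OF I] .
  have inK: "\<And>p q. (p,q) \<in> PK I k \<Longrightarrow> \<exists>g\<in>K I k. px g = p \<and> py g = q"
    unfolding PK_def by blast
  from classify[OF P x0(2,1) y0(2,1)] obtain i j where ij: "i \<ge> 1" "j \<ge> 1" and
    cases: "(\<exists>a b. a \<noteq> 0 \<and> b \<noteq> 0 \<and> (fps_const a * fps_X ^ i, fps_const b * fps_X ^ j) \<in> PK I k \<and>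
        (\<forall>(p,q)\<in>PK I k. \<exists>r1 r2. fps_nth r1 0 = fps_nth r2 0 \<and> p = r1 * (fps_const a * fps_X ^ i) \<and>
              q = r2 * (fps_const b * fps_X ^ j)))
     \<or> ((fps_X ^ i, 0) \<in> PK I k \<and> (0, fps_X ^ j) \<in> PK I k \<and> (\<forall>(p,q)\<in>PK I k. fps_X ^ i dvd p \<and> fps_X ^ j dvd q))"
    by blast
  show ?thesis
    using cases
  proof
    assume "\<exists>a b. a \<noteq> 0 \<and> b \<noteq> 0 \<and> (fps_const a * fps_X ^ i, fps_const b * fps_X ^ j) \<in> PK I k \<and>
        (\<forall>(p,q)\<in>PK I k. \<exists>r1 r2. fps_nth r1 0 = fps_nth r2 0 \<and> p = r1 * (fps_const a * fps_X ^ i) \<and>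
              q = r2 * (fps_const b * fps_X ^ j))"
    then obtain a b where ab: "a \<noteq> 0" "b \<noteq> 0"
      and eP: "(fps_const a * fps_X ^ i, fps_const b * fps_X ^ j) \<in> PK I k"
      and rep: "\<forall>(p,q)\<in>PK I k. \<exists>r1 r2. fps_nth r1 0 = fps_nth r2 0 \<and> p = r1 * (fps_const a * fps_X ^ i) \<and>
              q = r2 * (fps_const b * fps_X ^ j)" by blast
    obtain e where e: "e \<in> K I k" "px e = fps_const a * fps_X ^ i" "py e = fps_const b * fps_X ^ j"
      using inK[OF eP] by blast
    define T where "T = sc a * vx ^ i + sc b * vy ^ j"
    have "px (e - T) = 0" "py (e - T) = 0" using e ij by (simp_all add: T_def)
    from kernel[OF this] obtain h where h: "e - T = vx * vy * h" by blast
    define E where "E = vx ^ k * vy ^ k * (sc a * vx ^ i + sc b * vy ^ j) + vx ^ (k+1) * vy ^ (k+1) * h"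
    have Ee: "E = vx ^ k * vy ^ k * e"
    proof -
      have "e = T + vx * vy * h" using h by (simp add: algebra_simps)
      then show ?thesis by (simp add: E_def T_def xy_Suc algebra_simps)
    qed
    have EI: "E \<in> I" using e(1) Ee by (simp add: K_def)
    have EJ: "E \<in> Jk I k" using EI Ee by (auto simp: mem_Jk)
    have "Jk I k = ideal_sum (Jk I (k+1)) (principal E)"
    proof (intro set_eqI iffI)
      fix g assume "g \<in> Jk I k"
      then obtain \<kappa> where gI: "g \<in> I" and g: "g = vx ^ k * vy ^ k * \<kappa>" by (auto simp: mem_Jk)
      have kK: "\<kappa> \<in> K I k" using gI g by (simp add: K_def)
      then have "(px \<kappa>, py \<kappa>) \<in> PK I k" unfolding PK_def by blast
      then obtain r1 r2 where r: "fps_nth r1 0 = fps_nth r2 0" "px \<kappa> = r1 * (fps_const a * fps_X ^ i)"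
        "py \<kappa> = r2 * (fps_const b * fps_X ^ j)" using rep by blast
      have "px (\<kappa> - glue r1 r2 * e) = 0" "py (\<kappa> - glue r1 r2 * e) = 0" using r e by simp_all
      from kernel[OF this] obtain h' where h': "\<kappa> - glue r1 r2 * e = vx * vy * h'" by blast
      have geq: "g = vx ^ (k+1) * vy ^ (k+1) * h' + E * glue r1 r2"
      proof -
        have "\<kappa> = glue r1 r2 * e + vx * vy * h'" using h' by (simp add: algebra_simps)
        then show ?thesis by (simp add: g Ee xy_Suc algebra_simps)
      qed
      have "vx ^ (k+1) * vy ^ (k+1) * h' = g - E * glue r1 r2" using geq by simp
      also have "\<dots> \<in> I" using gI id_multr[OF I EI] id_diff[OF I] by blast
      finally have "vx ^ (k+1) * vy ^ (k+1) * h' \<in> Jk I (k+1)" by (auto simp: mem_Jk)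
      then show "g \<in> ideal_sum (Jk I (k+1)) (principal E)"
        unfolding mem_ideal_sum mem_principal using geq by blast
    next
      fix g assume "g \<in> ideal_sum (Jk I (k+1)) (principal E)"
      then obtain a' r where g: "g = a' + E * r" and a': "a' \<in> Jk I (k+1)"
        unfolding mem_ideal_sum mem_principal by blast
      obtain h' where a'I: "a' \<in> I" and ah: "a' = vx ^ (k+1) * vy ^ (k+1) * h'" using a' by (auto simp: mem_Jk)
      have "g \<in> I" using g id_add[OF I a'I id_multr[OF I EI]] by simp
      moreover have "g = vx ^ k * vy ^ k * (vx * vy * h' + e * r)"
        by (simp add: g ah Ee xy_Suc algebra_simps)
      ultimately show "g \<in> Jk I k" by (auto simp: mem_Jk)
    qed
    then have "type1 I k i j" using ij ab EJ unfolding type1_def Let_def E_def by blast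
    then show ?thesis by (auto simp: is_type1_def)
  next
    assume "(fps_X ^ i, 0) \<in> PK I k \<and> (0, fps_X ^ j) \<in> PK I k \<and> (\<forall>(p,q)\<in>PK I k. fps_X ^ i dvd p \<and> fps_X ^ j dvd q)"
    then have x1: "(fps_X ^ i, 0) \<in> PK I k" and y1: "(0, fps_X ^ j) \<in> PK I k"
      and dv: "\<forall>(p,q)\<in>PK I k. fps_X ^ i dvd p \<and> fps_X ^ j dvd q" by blast+
    show ?thesis
    proof (cases "is_type1 I k")
      case True then show ?thesis by blast
    next
      case nt1: False
      obtain e1 where e1: "e1 \<in> K I k" "px e1 = fps_X ^ i" "py e1 = 0" using inK[OF x1] by blast
      obtain e2 where e2: "e2 \<in> K I k" "px e2 = 0" "py e2 = fps_X ^ j" using inK[OF y1] by blast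
      have "px (e1 - vx ^ i) = 0" "py (e1 - vx ^ i) = 0" using e1 ij by simp_all
      from kernel[OF this] obtain h1 where h1: "e1 - vx ^ i = vx * vy * h1" by blast
      have "px (e2 - vy ^ j) = 0" "py (e2 - vy ^ j) = 0" using e2 ij by simp_all
      from kernel[OF this] obtain h2 where h2: "e2 - vy ^ j = vx * vy * h2" by blast
      define E1 where "E1 = vx ^ k * vy ^ k * vx ^ i + vx ^ (k+1) * vy ^ (k+1) * h1"
      define E2 where "E2 = vx ^ k * vy ^ k * vy ^ j + vx ^ (k+1) * vy ^ (k+1) * h2"
      have Ee1: "E1 = vx ^ k * vy ^ k * e1"
      proof -
        have "e1 = vx ^ i + vx * vy * h1" using h1 by (simp add: algebra_simps)
        then show ?thesis by (simp add: E1_def xy_Suc algebra_simps)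
      qed
      have Ee2: "E2 = vx ^ k * vy ^ k * e2"
      proof -
        have "e2 = vy ^ j + vx * vy * h2" using h2 by (simp add: algebra_simps)
        then show ?thesis by (simp add: E2_def xy_Suc algebra_simps)
      qed
      have E1I: "E1 \<in> I" using e1(1) Ee1 by (simp add: K_def)
      have E2I: "E2 \<in> I" using e2(1) Ee2 by (simp add: K_def)
      have EJ: "E1 \<in> Jk I k" "E2 \<in> Jk I k" using E1I E2I Ee1 Ee2 by (auto simp: mem_Jk)
      have "Jk I k = ideal_sum (Jk I (k+1)) (ideal2 E1 E2)"
      proof (intro set_eqI iffI)
        fix g assume "g \<in> Jk I k"
        then obtain \<kappa> where gI: "g \<in> I" and g: "g = vx ^ k * vy ^ k * \<kappa>" by (auto simp: mem_Jk)
        have kK: "\<kappa> \<in> K I k" using gI g by (simp add: K_def)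
        then have "(px \<kappa>, py \<kappa>) \<in> PK I k" unfolding PK_def by blast
        then have "fps_X ^ i dvd px \<kappa>" "fps_X ^ j dvd py \<kappa>" using dv by auto
        then obtain s t where st: "px \<kappa> = fps_X ^ i * s" "py \<kappa> = fps_X ^ j * t" by (auto elim!: dvdE)
        have "px (\<kappa> - ex s * e1 - fps_const t * e2) = 0" "py (\<kappa> - ex s * e1 - fps_const t * e2) = 0"
          using st e1 e2 by (simp_all add: mult.commute)
        from kernel[OF this] obtain h' where h': "\<kappa> - ex s * e1 - fps_const t * e2 = vx * vy * h'" by blast
        have geq: "g = vx ^ (k+1) * vy ^ (k+1) * h' + (ex s * E1 + fps_const t * E2)"
        proof -
          have "\<kappa> = ex s * e1 + fps_const t * e2 + vx * vy * h'" using h' by (simp add: algebra_simps)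
          then show ?thesis by (simp add: g Ee1 Ee2 xy_Suc algebra_simps)
        qed
        have "vx ^ (k+1) * vy ^ (k+1) * h' = g - (ex s * E1 + fps_const t * E2)" using geq by simp
        also have "\<dots> \<in> I" using gI id_mult[OF I E1I] id_mult[OF I E2I] id_diff[OF I] id_add[OF I] by blast
        finally have "vx ^ (k+1) * vy ^ (k+1) * h' \<in> Jk I (k+1)" by (auto simp: mem_Jk)
        then show "g \<in> ideal_sum (Jk I (k+1)) (ideal2 E1 E2)"
          unfolding mem_ideal_sum mem_ideal2 using geq by blast
      next
        fix g assume "g \<in> ideal_sum (Jk I (k+1)) (ideal2 E1 E2)"
        then obtain a' g1 g2 where g: "g = a' + (g1 * E1 + g2 * E2)" and a': "a' \<in> Jk I (k+1)"
          unfolding mem_ideal_sum mem_ideal2 by blast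
        obtain h' where a'I: "a' \<in> I" and ah: "a' = vx ^ (k+1) * vy ^ (k+1) * h'" using a' by (auto simp: mem_Jk)
        have "g1 * E1 + g2 * E2 \<in> I" using id_add[OF I id_mult[OF I E1I] id_mult[OF I E2I]] .
        then have "g \<in> I" using g id_add[OF I a'I] by simp
        moreover have "g = vx ^ k * vy ^ k * (vx * vy * h' + g1 * e1 + g2 * e2)"
          by (simp add: g ah Ee1 Ee2 xy_Suc algebra_simps)
        ultimately show "g \<in> Jk I k" by (auto simp: mem_Jk)
      qed
      then have "type2 I k i j" using ij EJ nt1 unfolding type2_def Let_def E1_def E2_def by blast
      then show ?thesis by (auto simp: is_type2_def)
    qed
  qed
qed

lemma trichotomy:
  assumes I: "is_ideal I" and cl: "colength I n"
  shows "(vx ^ k * vy ^ k \<in> I \<and> \<not> is_type1 I k \<and> \<not> is_type2 I k) \<or>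
            (vx ^ k * vy ^ k \<notin> I \<and> is_type1 I k \<and> \<not> is_type2 I k) \<or>
            (vx ^ k * vy ^ k \<notin> I \<and> \<not> is_type1 I k \<and> is_type2 I k)"
proof (cases "vx ^ k * vy ^ k \<in> I")
  case True
  then show ?thesis using type1_notin[OF I] type2_notin[OF I]
    by (auto simp: is_type1_def is_type2_def)
next
  case False
  have n12: "is_type2 I k \<Longrightarrow> \<not> is_type1 I k" by (auto simp: is_type2_def type2_def)
  show ?thesis using exists_type[OF I cl False] n12 False by blast
qed



lemma Xdvd_iff: "(fps_X ^ i dvd (p :: complex fps)) \<longleftrightarrow> (\<forall>l<i. fps_nth p l = 0)"
proof
  assume "fps_X ^ i dvd p"
  then obtain s where "p = fps_X ^ i * s" by (auto elim!: dvdE)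
  then show "\<forall>l<i. fps_nth p l = 0" by (simp add: fps_X_power_mult_nth)
next
  assume h: "\<forall>l<i. fps_nth p l = 0"
  have "p = fps_shift i p * fps_X ^ i"
    by (rule fps_ext) (use h in \<open>auto simp: fps_X_power_mult_right_nth\<close>)
  then show "fps_X ^ i dvd p" by (metis dvd_triv_right)
qed

lemma t1_ker:
  fixes p q :: "complex fps"
  assumes ab: "a \<noteq> 0" "b \<noteq> 0" and ij: "i \<ge> 1" "j \<ge> 1" and c: "fps_nth p 0 = fps_nth q 0"
  shows "((\<forall>l<i. fps_nth p l = 0) \<and> (\<forall>m<j. fps_nth q m = 0) \<and> b * fps_nth p i - a * fps_nth q j = 0) \<longleftrightarrow>
    (\<exists>r1 r2. fps_nth r1 0 = fps_nth r2 0 \<and> p = r1 * (fps_const a * fps_X ^ i) \<and> q = r2 * (fps_const b * fps_X ^ j))"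
proof
  assume h: "(\<forall>l<i. fps_nth p l = 0) \<and> (\<forall>m<j. fps_nth q m = 0) \<and> b * fps_nth p i - a * fps_nth q j = 0"
  have p: "p = fps_shift i p * fps_X ^ i"
    by (rule fps_ext) (use h in \<open>auto simp: fps_X_power_mult_right_nth\<close>)
  have q: "q = fps_shift j q * fps_X ^ j"
    by (rule fps_ext) (use h in \<open>auto simp: fps_X_power_mult_right_nth\<close>)
  define r1 where "r1 = fps_const (inverse a) * fps_shift i p"
  define r2 where "r2 = fps_const (inverse b) * fps_shift j q"
  have "fps_nth r1 0 = fps_nth r2 0" using h ab by (simp add: r1_def r2_def field_simps)
  moreover have "p = r1 * (fps_const a * fps_X ^ i)"
  proof -
    have "r1 * (fps_const a * fps_X ^ i) = (fps_const (inverse a) * fps_const a) * (fps_shift i p * fps_X ^ i)"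
      by (simp only: r1_def mult_ac)
    also have "\<dots> = p" using ab p[symmetric] by simp
    finally show ?thesis by simp
  qed
  moreover have "q = r2 * (fps_const b * fps_X ^ j)"
  proof -
    have "r2 * (fps_const b * fps_X ^ j) = (fps_const (inverse b) * fps_const b) * (fps_shift j q * fps_X ^ j)"
      by (simp only: r2_def mult_ac)
    also have "\<dots> = q" using ab q[symmetric] by simp
    finally show ?thesis by simp
  qed
  ultimately show "\<exists>r1 r2. fps_nth r1 0 = fps_nth r2 0 \<and> p = r1 * (fps_const a * fps_X ^ i) \<and> q = r2 * (fps_const b * fps_X ^ j)"
    by blast
next
  assume "\<exists>r1 r2. fps_nth r1 0 = fps_nth r2 0 \<and> p = r1 * (fps_const a * fps_X ^ i) \<and> q = r2 * (fps_const b * fps_X ^ j)"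
  then obtain r1 r2 where r: "fps_nth r1 0 = fps_nth r2 0" "p = (fps_const a * r1) * fps_X ^ i" "q = (fps_const b * r2) * fps_X ^ j"
    by (auto simp: mult_ac)
  show "(\<forall>l<i. fps_nth p l = 0) \<and> (\<forall>m<j. fps_nth q m = 0) \<and> b * fps_nth p i - a * fps_nth q j = 0"
    using r by (simp add: fps_X_power_mult_right_nth)
qed

definition psi1 :: "complex \<Rightarrow> complex \<Rightarrow> nat \<Rightarrow> nat \<Rightarrow> complex fps \<Rightarrow> complex fps \<Rightarrow> nat \<Rightarrow> complex" where
  "psi1 a b i j p q l = (if l < i then fps_nth p l else if l < i + j - 1 then fps_nth q (l - i + 1)
      else b * fps_nth p i - a * fps_nth q j)"

definition psi2 :: "nat \<Rightarrow> nat \<Rightarrow> complex fps \<Rightarrow> complex fps \<Rightarrow> nat \<Rightarrow> complex" where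
  "psi2 i j p q l = (if l < i then fps_nth p l else fps_nth q (l - i + 1))"

lemma psi1_zero:
  assumes ij: "i \<ge> 1" "j \<ge> 1" and c: "fps_nth p 0 = fps_nth q 0"
  shows "(\<forall>l<i+j. psi1 a b i j p q l = 0) \<longleftrightarrow>
    ((\<forall>l<i. fps_nth p l = 0) \<and> (\<forall>m<j. fps_nth q m = 0) \<and> b * fps_nth p i - a * fps_nth q j = 0)"
proof
  assume h: "\<forall>l<i+j. psi1 a b i j p q l = 0"
  have A: "\<forall>l<i. fps_nth p l = 0"
  proof (intro allI impI)
    fix l assume "l < i" then show "fps_nth p l = 0" using h[rule_format, of l] by (simp add: psi1_def)
  qed
  have B: "\<forall>m<j. fps_nth q m = 0"
  proof (intro allI impI)
    fix m assume m: "m < j"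
    show "fps_nth q m = 0"
    proof (cases "m = 0")
      case True then show ?thesis using A c ij by auto
    next
      case False
      then have "m + i - 1 < i + j" "\<not> m + i - 1 < i" "m + i - 1 < i + j - 1" "m + i - 1 - i + 1 = m"
        using m ij by auto
      then show ?thesis using h[rule_format, of "m + i - 1"] by (simp add: psi1_def)
    qed
  qed
  have "i + j - 1 < i + j" "\<not> i + j - 1 < i" "\<not> i + j - 1 < i + j - 1" using ij by auto
  then have C: "b * fps_nth p i - a * fps_nth q j = 0" using h[rule_format, of "i + j - 1"] by (simp add: psi1_def)
  show "(\<forall>l<i. fps_nth p l = 0) \<and> (\<forall>m<j. fps_nth q m = 0) \<and> b * fps_nth p i - a * fps_nth q j = 0"
    using A B C by blast
next
  assume h: "(\<forall>l<i. fps_nth p l = 0) \<and> (\<forall>m<j. fps_nth q m = 0) \<and> b * fps_nth p i - a * fps_nth q j = 0"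
  show "\<forall>l<i+j. psi1 a b i j p q l = 0"
  proof (intro allI impI)
    fix l assume l: "l < i + j"
    show "psi1 a b i j p q l = 0"
    proof (cases "l < i")
      case True then show ?thesis using h by (simp add: psi1_def)
    next
      case False
      then show ?thesis using h l ij by (auto simp: psi1_def)
    qed
  qed
qed

lemma psi2_zero:
  assumes ij: "i \<ge> 1" "j \<ge> 1" and c: "fps_nth p 0 = fps_nth q 0"
  shows "(\<forall>l<i+j-1. psi2 i j p q l = 0) \<longleftrightarrow>
    ((\<forall>l<i. fps_nth p l = 0) \<and> (\<forall>m<j. fps_nth q m = 0))"
proof
  assume h: "\<forall>l<i+j-1. psi2 i j p q l = 0"
  have A: "\<forall>l<i. fps_nth p l = 0"
  proof (intro allI impI)
    fix l assume "l < i" then show "fps_nth p l = 0" using h[rule_format, of l] ij by (simp add: psi2_def)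
  qed
  have B: "\<forall>m<j. fps_nth q m = 0"
  proof (intro allI impI)
    fix m assume m: "m < j"
    show "fps_nth q m = 0"
    proof (cases "m = 0")
      case True then show ?thesis using A c ij by auto
    next
      case False
      then have "m + i - 1 < i + j - 1" "\<not> m + i - 1 < i" "m + i - 1 - i + 1 = m"
        using m ij by auto
      then show ?thesis using h[rule_format, of "m + i - 1"] by (simp add: psi2_def)
    qed
  qed
  show "(\<forall>l<i. fps_nth p l = 0) \<and> (\<forall>m<j. fps_nth q m = 0)" using A B by blast
next
  assume h: "(\<forall>l<i. fps_nth p l = 0) \<and> (\<forall>m<j. fps_nth q m = 0)"
  show "\<forall>l<i+j-1. psi2 i j p q l = 0"
  proof (intro allI impI)
    fix l assume l: "l < i + j - 1"
    show "psi2 i j p q l = 0"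
    proof (cases "l < i")
      case True then show ?thesis using h by (simp add: psi2_def)
    next
      case False
      then show ?thesis using h l ij by (auto simp: psi2_def)
    qed
  qed
qed



lemma colength_xy:
  assumes I: "is_ideal I" and xy: "vx ^ k * vy ^ k \<in> I"
  shows "colength (Lk I k) 0"
proof -
  have "Lk I k = UNIV" using K_xy_in[OF I xy] by (auto intro: LkI[of _ _ _ _ 0])
  then show ?thesis by (simp add: colength_def)
qed

lemma colength_type1:
  assumes I: "is_ideal I" and t: "type1 I k i j"
  shows "colength (Lk I k) (i+j)"
proof -
  obtain a b e where ab: "a \<noteq> 0" "b \<noteq> 0" and ij: "i \<ge> 1" "j \<ge> 1" and eK: "e \<in> K I k"
    and pe: "px e = fps_const a * fps_X ^ i" "py e = fps_const b * fps_X ^ j"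
    and rep: "\<forall>\<kappa>\<in>K I k. \<exists>r h. \<kappa> = r * e + vx * vy * h"
    using type1_data[OF I t] by blast
  have KI: "is_ideal (K I k)" using K_ideal[OF I] .
  have char: "g \<in> Lk I k \<longleftrightarrow> (\<exists>r1 r2. fps_nth r1 0 = fps_nth r2 0 \<and> px g = r1 * (fps_const a * fps_X ^ i) \<and> py g = r2 * (fps_const b * fps_X ^ j))" for g
  proof
    assume "g \<in> Lk I k"
    then obtain \<kappa> where k: "\<kappa> \<in> K I k" "px g = px \<kappa>" "py g = py \<kappa>" using Lk_char by blast
    then obtain r h where "\<kappa> = r * e + vx * vy * h" using rep by blast
    then have "px g = px r * (fps_const a * fps_X ^ i)" "py g = py r * (fps_const b * fps_X ^ j)"
      using k pe by simp_all
    then show "\<exists>r1 r2. fps_nth r1 0 = fps_nth r2 0 \<and> px g = r1 * (fps_const a * fps_X ^ i) \<and> py g = r2 * (fps_const b * fps_X ^ j)"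
      using px_py_0 by blast
  next
    assume "\<exists>r1 r2. fps_nth r1 0 = fps_nth r2 0 \<and> px g = r1 * (fps_const a * fps_X ^ i) \<and> py g = r2 * (fps_const b * fps_X ^ j)"
    then obtain r1 r2 where r: "fps_nth r1 0 = fps_nth r2 0" "px g = r1 * (fps_const a * fps_X ^ i)" "py g = r2 * (fps_const b * fps_X ^ j)"
      by blast
    have "glue r1 r2 * e \<in> K I k" using id_mult[OF KI eK] .
    moreover have "px g = px (glue r1 r2 * e)" "py g = py (glue r1 r2 * e)" using r pe by simp_all
    ultimately show "g \<in> Lk I k" using Lk_char by blast
  qed
  define \<Phi> where "\<Phi> = (\<lambda>g. psi1 a b i j (px g) (py g))"
  show ?thesis
  proof (rule colength_by_functional[where \<Phi> = \<Phi>])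
    fix g h :: ps and l assume "l < i + j"
    show "\<Phi> (g + h) l = \<Phi> g l + \<Phi> h l" by (simp add: \<Phi>_def psi1_def algebra_simps)
  next
    fix c and g :: ps and l assume "l < i + j"
    show "\<Phi> (sc c * g) l = c * \<Phi> g l" by (simp add: \<Phi>_def psi1_def algebra_simps)
  next
    fix g
    show "g \<in> Lk I k \<longleftrightarrow> (\<forall>l<i+j. \<Phi> g l = 0)"
      unfolding \<Phi>_def char psi1_zero[OF ij px_py_0] t1_ker[OF ab ij px_py_0] ..
  next
    fix l assume l: "l < i + j"
    have "\<exists>p q. fps_nth p 0 = fps_nth q 0 \<and> (\<forall>l'<i+j. psi1 a b i j p q l' = (if l' = l then 1 else 0))"
    proof (cases "l < i")
      case True
      show ?thesis
        by (rule exI[of _ "fps_X ^ l"], rule exI[of _ "fps_const (if l = 0 then 1 else 0)"])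
           (use True ij in \<open>auto simp: psi1_def\<close>)
    next
      case False
      show ?thesis
      proof (cases "l < i + j - 1")
        case True
        show ?thesis
          by (rule exI[of _ 0], rule exI[of _ "fps_X ^ (l - i + 1)"])
             (use True False ij in \<open>auto simp: psi1_def\<close>)
      next
        case False2: False
        then have ll: "l = i + j - 1" using l by simp
        show ?thesis
          by (rule exI[of _ 0], rule exI[of _ "fps_const (- inverse a) * fps_X ^ j"])
             (use ll ij ab in \<open>auto simp: psi1_def\<close>)
      qed
    qed
    then obtain p q where pq: "fps_nth p 0 = fps_nth q 0" "\<forall>l'<i+j. psi1 a b i j p q l' = (if l' = l then 1 else 0)"
      by blast
    show "\<exists>bb. \<forall>l'<i+j. \<Phi> bb l' = (if l' = l then 1 else 0)"
      by (rule exI[of _ "glue p q"]) (use pq in \<open>simp add: \<Phi>_def\<close>)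
  qed
qed

lemma colength_type2:
  assumes I: "is_ideal I" and t: "type2 I k i j"
  shows "colength (Lk I k) (i+j-1)"
proof -
  obtain e1 e2 where ij: "i \<ge> 1" "j \<ge> 1" and eK: "e1 \<in> K I k" "e2 \<in> K I k"
    and pe: "px e1 = fps_X ^ i" "py e1 = 0" "px e2 = 0" "py e2 = fps_X ^ j"
    and rep: "\<forall>\<kappa>\<in>K I k. \<exists>r1 r2 h. \<kappa> = r1 * e1 + r2 * e2 + vx * vy * h"
    using type2_data[OF I t] by blast
  have KI: "is_ideal (K I k)" using K_ideal[OF I] .
  have char: "g \<in> Lk I k \<longleftrightarrow> (fps_X ^ i dvd px g \<and> fps_X ^ j dvd py g)" for g
  proof
    assume "g \<in> Lk I k"
    then obtain \<kappa> where k: "\<kappa> \<in> K I k" "px g = px \<kappa>" "py g = py \<kappa>" using Lk_char by blast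
    then obtain r1 r2 h where "\<kappa> = r1 * e1 + r2 * e2 + vx * vy * h" using rep by blast
    then have "px g = px r1 * fps_X ^ i" "py g = py r2 * fps_X ^ j"
      using k pe by simp_all
    then show "fps_X ^ i dvd px g \<and> fps_X ^ j dvd py g" by simp
  next
    assume "fps_X ^ i dvd px g \<and> fps_X ^ j dvd py g"
    then obtain s t where st: "px g = fps_X ^ i * s" "py g = fps_X ^ j * t" by (auto elim!: dvdE)
    have "ex s * e1 + fps_const t * e2 \<in> K I k" using id_add[OF KI id_mult[OF KI eK(1)] id_mult[OF KI eK(2)]] .
    moreover have "px g = px (ex s * e1 + fps_const t * e2)" "py g = py (ex s * e1 + fps_const t * e2)"
      using st pe by (simp_all add: mult.commute)
    ultimately show "g \<in> Lk I k" using Lk_char by blast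
  qed
  define \<Phi> where "\<Phi> = (\<lambda>g. psi2 i j (px g) (py g))"
  show ?thesis
  proof (rule colength_by_functional[where \<Phi> = \<Phi>])
    fix g h :: ps and l assume "l < i + j - 1"
    show "\<Phi> (g + h) l = \<Phi> g l + \<Phi> h l" by (simp add: \<Phi>_def psi2_def algebra_simps)
  next
    fix c and g :: ps and l assume "l < i + j - 1"
    show "\<Phi> (sc c * g) l = c * \<Phi> g l" by (simp add: \<Phi>_def psi2_def algebra_simps)
  next
    fix g
    show "g \<in> Lk I k \<longleftrightarrow> (\<forall>l<i+j-1. \<Phi> g l = 0)"
      unfolding \<Phi>_def char psi2_zero[OF ij px_py_0] Xdvd_iff ..
  next
    fix l assume l: "l < i + j - 1"
    have "\<exists>p q. fps_nth p 0 = fps_nth q 0 \<and> (\<forall>l'<i+j-1. psi2 i j p q l' = (if l' = l then 1 else 0))"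
    proof (cases "l < i")
      case True
      show ?thesis
        by (rule exI[of _ "fps_X ^ l"], rule exI[of _ "fps_const (if l = 0 then 1 else 0)"])
           (use True ij in \<open>auto simp: psi2_def\<close>)
    next
      case False
      show ?thesis
        by (rule exI[of _ 0], rule exI[of _ "fps_X ^ (l - i + 1)"])
           (use l False ij in \<open>auto simp: psi2_def\<close>)
    qed
    then obtain p q where pq: "fps_nth p 0 = fps_nth q 0" "\<forall>l'<i+j-1. psi2 i j p q l' = (if l' = l then 1 else 0)"
      by blast
    show "\<exists>bb. \<forall>l'<i+j-1. \<Phi> bb l' = (if l' = l then 1 else 0)"
      by (rule exI[of _ "glue p q"]) (use pq in \<open>simp add: \<Phi>_def\<close>)
  qed
qed



lemma colength_UNIV: "colength UNIV 0" by (simp add: colength_def)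

lemma M_step:
  assumes I: "is_ideal I" and cM: "colength (M I k) a" and cL: "colength (Lk I k) d"
  shows "colength (M I (Suc k)) (a + d)"
proof -
  obtain b where bsp: "\<forall>g. \<exists>c. g - (\<Sum>l<d. sc (c l) * b l) \<in> Lk I k"
    and bind: "\<forall>c. (\<Sum>l<d. sc (c l) * b l) \<in> Lk I k \<longrightarrow> (\<forall>l<d. c l = 0)"
    using cL unfolding colength_def by blast
  have sumeq: "(\<Sum>l<d. sc (c l) * (vx ^ k * vy ^ k * b l)) = vx ^ k * vy ^ k * (\<Sum>l<d. sc (c l) * b l)" for c
    by (simp add: sum_distrib_left mult.left_commute)
  show ?thesis
  proof (rule colength_extend[OF M_ideal[OF I] M_ideal[OF I] _ cM, where g = "\<lambda>l. vx ^ k * vy ^ k * b l"])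
    show "M I (Suc k) \<subseteq> M I k"
    proof
      fix x assume "x \<in> M I (Suc k)"
      then obtain \<iota> t where "\<iota> \<in> I" "x = \<iota> + vx ^ Suc k * vy ^ Suc k * t" unfolding M_def by blast
      then show "x \<in> M I k" by (intro MI[of \<iota> _ _ _ "vx * vy * t"]) (simp_all add: xy_Suc mult_ac)
    qed
  next
    show "\<forall>l<d. vx ^ k * vy ^ k * b l \<in> M I k"
      using id0[OF I] by (auto intro: MI[of 0])
  next
    show "\<forall>w\<in>M I k. \<exists>c. w - (\<Sum>l<d. sc (c l) * (vx ^ k * vy ^ k * b l)) \<in> M I (Suc k)"
    proof
      fix w assume "w \<in> M I k"
      then obtain \<iota> t where it: "\<iota> \<in> I" "w = \<iota> + vx ^ k * vy ^ k * t" unfolding M_def by blast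
      obtain c where "t - (\<Sum>l<d. sc (c l) * b l) \<in> Lk I k" using bsp by blast
      then obtain \<kappa> h where kh: "t - (\<Sum>l<d. sc (c l) * b l) = \<kappa> + vx * vy * h" "\<kappa> \<in> K I k"
        unfolding Lk_def by blast
      have "w - (\<Sum>l<d. sc (c l) * (vx ^ k * vy ^ k * b l)) = \<iota> + vx ^ k * vy ^ k * (t - (\<Sum>l<d. sc (c l) * b l))"
        by (simp only: sumeq it right_diff_distrib add_diff_eq)
      also have "\<dots> = (\<iota> + vx ^ k * vy ^ k * \<kappa>) + vx ^ Suc k * vy ^ Suc k * h"
        unfolding kh(1) xy_Suc by (simp add: algebra_simps)
      finally have eq: "w - (\<Sum>l<d. sc (c l) * (vx ^ k * vy ^ k * b l)) = (\<iota> + vx ^ k * vy ^ k * \<kappa>) + vx ^ Suc k * vy ^ Suc k * h" .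
      have "\<iota> + vx ^ k * vy ^ k * \<kappa> \<in> I" using id_add[OF I it(1)] kh(2) by (simp add: K_def)
      then show "\<exists>c. w - (\<Sum>l<d. sc (c l) * (vx ^ k * vy ^ k * b l)) \<in> M I (Suc k)"
        using eq MI by blast
    qed
  next
    show "\<forall>c. (\<Sum>l<d. sc (c l) * (vx ^ k * vy ^ k * b l)) \<in> M I (Suc k) \<longrightarrow> (\<forall>l<d. c l = 0)"
    proof (rule allI, rule impI)
      fix c assume "(\<Sum>l<d. sc (c l) * (vx ^ k * vy ^ k * b l)) \<in> M I (Suc k)"
      then obtain \<iota> t where it: "\<iota> \<in> I" "vx ^ k * vy ^ k * (\<Sum>l<d. sc (c l) * b l) = \<iota> + vx ^ Suc k * vy ^ Suc k * t"
        unfolding M_def sumeq by blast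
      define S where "S = (\<Sum>l<d. sc (c l) * b l)"
      have "\<iota> = vx ^ k * vy ^ k * (S - vx * vy * t)" using it(2) by (simp add: S_def xy_Suc algebra_simps)
      then have "S - vx * vy * t \<in> K I k" using it(1) by (simp add: K_def)
      then have "S \<in> Lk I k" by (rule LkI) simp
      then show "\<forall>l<d. c l = 0" using bind by (simp add: S_def)
    qed
  qed
qed

lemma M_0: "M I 0 = UNIV" if "is_ideal I"
  using id0[OF that] by (auto intro: MI[of 0 _ _ _ ])

lemma M_v: assumes I: "is_ideal I" and uv: "u \<le> v" and xy: "vx ^ u * vy ^ v \<in> I"
  shows "M I v = I"
proof
  have xyv: "vx ^ v * vy ^ v \<in> I"
  proof -
    have "vx ^ v * vy ^ v = vx ^ (v - u) * (vx ^ u * vy ^ v)"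
      using uv by (simp add: mult.assoc power_add[symmetric])
    then show ?thesis using id_mult[OF I xy] by (simp only:)
  qed
  show "M I v \<subseteq> I"
  proof
    fix x assume "x \<in> M I v"
    then obtain \<iota> t where "\<iota> \<in> I" "x = \<iota> + vx ^ v * vy ^ v * t" unfolding M_def by blast
    then show "x \<in> I" using id_add[OF I _ id_multr[OF I xyv]] by blast
  qed
  show "I \<subseteq> M I v" by (auto intro: MI[of _ _ _ _ 0])
qed

lemma chain:
  assumes I: "is_ideal I" and cL: "\<forall>k<v. colength (Lk I k) (D k)"
  shows "k \<le> v \<Longrightarrow> colength (M I k) (\<Sum>k'<k. D k')"
proof (induction k)
  case 0
  then show ?case using M_0[OF I] colength_UNIV by simp
next
  case (Suc k)
  then have "colength (M I k) (\<Sum>k'<k. D k')" by simp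
  from M_step[OF I this] cL Suc.prems show ?case by simp
qed

theorem mainTheorem12:
  fixes u v n :: nat and I :: "ps set"
  assumes "1 \<le> u" and "u \<le> v" and "hilb_curve u v n I"
  shows "(\<forall>k<v.
            (vx ^ k * vy ^ k \<in> I \<and> \<not> is_type1 I k \<and> \<not> is_type2 I k) \<or>
            (vx ^ k * vy ^ k \<notin> I \<and> is_type1 I k \<and> \<not> is_type2 I k) \<or>
            (vx ^ k * vy ^ k \<notin> I \<and> \<not> is_type1 I k \<and> is_type2 I k))
      \<and> (\<forall>\<Delta> :: nat \<Rightarrow> nat. (\<forall>k<v. delta_rel I k (\<Delta> k)) \<longrightarrow> (\<Sum>k<v. \<Delta> k) = n)"
proof -
  have I: "is_ideal I" and cl: "colength I n" and xy: "vx ^ u * vy ^ v \<in> I"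
    using assms(3) unfolding hilb_curve_def by blast+
  have part1: "\<forall>k<v.
            (vx ^ k * vy ^ k \<in> I \<and> \<not> is_type1 I k \<and> \<not> is_type2 I k) \<or>
            (vx ^ k * vy ^ k \<notin> I \<and> is_type1 I k \<and> \<not> is_type2 I k) \<or>
            (vx ^ k * vy ^ k \<notin> I \<and> \<not> is_type1 I k \<and> is_type2 I k)"
    using trichotomy[OF I cl] by blast
  have part2: "(\<Sum>k<v. \<Delta> k) = n" if d: "\<forall>k<v. delta_rel I k (\<Delta> k)" for \<Delta> :: "nat \<Rightarrow> nat"
  proof -
    have cL: "\<forall>k<v. colength (Lk I k) (\<Delta> k)"
    proof (intro allI impI)
      fix k assume "k < v"
      then have "delta_rel I k (\<Delta> k)" using d by blast
      then show "colength (Lk I k) (\<Delta> k)"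
        unfolding delta_rel_def
        using colength_xy[OF I] colength_type1[OF I] colength_type2[OF I] by auto
    qed
    have "colength (M I v) (\<Sum>k<v. \<Delta> k)" using chain[OF I cL] by simp
    then have "colength I (\<Sum>k<v. \<Delta> k)" using M_v[OF I assms(2) xy] by simp
    then show ?thesis using colength_unique[OF I cl] by simp
  qed
  show ?thesis using part1 part2 by blast
qed

end
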